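(* Let $\Gamma$ be a congruence subgroup of $\mathrm{SL}_2(\mathbb{Z})$ containing $-I$, of level $N_0$, and let $N=N_0$, $4N_0$ or $2N_0$ according as $v_2(N_0)$ is $0$, $1$ or $\ge2$; assume $N>1$. Let $H$ be the image of $\Gamma$ in $\mathrm{SL}_2(\mathbb{Z}/N\mathbb{Z})$, let $\widetilde H=(\mathbb{Z}/N\mathbb{Z})^\times\cdot H\subseteq\mathrm{GL}_2(\mathbb{Z}/N\mathbb{Z})$, and assume $H=\widetilde H\cap\mathrm{SL}_2(\mathbb{Z}/N\mathbb{Z})$. Let $\mathcal{N}$ be the normalizer of $\widetilde H$ in $\mathrm{GL}_2(\mathbb{Z}/N\mathbb{Z})$, $\mathcal{C}=\mathcal{N}/\widetilde H$, and $Q_N=(\mathbb{Z}/N\mathbb{Z})^\times/((\mathbb{Z}/N\mathbb{Z})^\times)^2$, with $\det\colon\mathcal{C}\to Q_N$ the homomorphism induced by the determinant. Then the subgroups $G(N)\subseteq\mathrm{GL}_2(\mathbb{Z}/N\mathbb{Z})$ satisfying (a) $G(N)\cap\mathrm{SL}_2(\mathbb{Z}/N\mathbb{Z})=H$, (b) $G(N)\supseteq(\mathbb{Z}/N\mathbb{Z})^\times\cdot I$, and (c) $\det(G(N))=(\mathbb{Z}/N\mathbb{Z})^\times$ are precisely the inverse images under $\mathcal{N}\to\mathcal{C}$ of the subgroups $W\subseteq\mathcal{C}$ for which the determinant induces an isomorphism $W\xrightarrow{\sim}Q_N$.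
   Context: $v_2$ is the $2$-adic valuation. The determinant induces a map on $\mathcal{C}$ to $Q_N$ because $\det(\widetilde H)=((\mathbb{Z}/N\mathbb{Z})^\times)^2$. *)

theory Defs
  imports "HOL-Algebra.Algebra" "HOL-Computational_Algebra.Primes"
begin

text \<open>2x2 matrices (a,b,c,d) = [[a,b],[c,d]] with integer entries.\<close>
type_synonym mat2 = "int \<times> int \<times> int \<times> int"

fun mmul :: "mat2 \<Rightarrow> mat2 \<Rightarrow> mat2" where
  "mmul (a,b,c,d) (p,q,r,s) = (a*p + b*r, a*q + b*s, c*p + d*r, c*q + d*s)"

fun mdet :: "mat2 \<Rightarrow> int" where
  "mdet (x1,x2,x3,x4) = x1*x4 - x2*x3"

fun mred :: "nat \<Rightarrow> mat2 \<Rightarrow> mat2" where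
  "mred N (a,b,c,d) = (a mod int N, b mod int N, c mod int N, d mod int N)"

definition scal :: "int \<Rightarrow> mat2" where
  "scal u = (u, 0, 0, u)"

definition SL2Z :: "mat2 monoid" where
  "SL2Z = \<lparr>carrier = {A. mdet A = 1}, monoid.mult = mmul, monoid.one = (1,0,0,1)\<rparr>"

definition principal_cong :: "nat \<Rightarrow> mat2 set" where
  "principal_cong M = {A \<in> carrier SL2Z. mred M A = mred M (1,0,0,1)}"

definition congruence_subgroup :: "mat2 set \<Rightarrow> bool" where
  "congruence_subgroup \<Gamma> \<longleftrightarrow> subgroup \<Gamma> SL2Z \<and> (\<exists>M>0. principal_cong M \<subseteq> \<Gamma>)"

definition level :: "mat2 set \<Rightarrow> nat" where
  "level \<Gamma> = (LEAST M. M > 0 \<and> principal_cong M \<subseteq> \<Gamma>)"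

definition units_mod :: "nat \<Rightarrow> int set" where
  "units_mod N = {u. 0 \<le> u \<and> u < int N \<and> coprime u (int N)}"

definition GL2 :: "nat \<Rightarrow> mat2 monoid" where
  "GL2 N = \<lparr>carrier = {A. mred N A = A \<and> coprime (mdet A) (int N)},
            monoid.mult = (\<lambda>A B. mred N (mmul A B)), monoid.one = mred N (1,0,0,1)\<rparr>"

definition SL2 :: "nat \<Rightarrow> mat2 set" where
  "SL2 N = {A \<in> carrier (GL2 N). mdet A mod int N = 1 mod int N}"

definition UnitsN :: "nat \<Rightarrow> int monoid" where
  "UnitsN N = \<lparr>carrier = units_mod N, monoid.mult = (\<lambda>x y. (x*y) mod int N), monoid.one = 1 mod int N\<rparr>"

definition squares_mod :: "nat \<Rightarrow> int set" where
  "squares_mod N = {(u*u) mod int N | u. u \<in> units_mod N}"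

definition QN :: "nat \<Rightarrow> int set monoid" where
  "QN N = UnitsN N Mod squares_mod N"

definition Htilde :: "nat \<Rightarrow> mat2 set \<Rightarrow> mat2 set" where
  "Htilde N H = {mred N (mmul (scal u) h) | u h. u \<in> units_mod N \<and> h \<in> H}"

definition NormHt :: "nat \<Rightarrow> mat2 set \<Rightarrow> mat2 set" where
  "NormHt N H = normalizer (GL2 N) (Htilde N H)"

definition Cgrp :: "nat \<Rightarrow> mat2 set \<Rightarrow> mat2 set monoid" where
  "Cgrp N H = ((GL2 N)\<lparr>carrier := NormHt N H\<rparr>) Mod (Htilde N H)"

text \<open>Map \<C> \<rightarrow> Q_N induced by the determinant: a coset K goes to the
  square class of det g for (any, equivalently some) g in K.\<close>
definition detC :: "nat \<Rightarrow> mat2 set \<Rightarrow> int set" where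
  "detC N K = r_coset (UnitsN N) (squares_mod N) (mdet (SOME g. g \<in> K) mod int N)"

definition preimC :: "nat \<Rightarrow> mat2 set \<Rightarrow> mat2 set set \<Rightarrow> mat2 set" where
  "preimC N H W = {g \<in> NormHt N H. r_coset (GL2 N) (Htilde N H) g \<in> W}"

end

theory Submission
  imports Defs
begin

lemma abstract_main:
  fixes Gr :: "('a, 'c) monoid_scheme" and U :: "'b monoid"
  assumes grp: "group Gr" and cU: "comm_group U" and dh: "d \<in> hom Gr U"
    and sq: "subgroup Sq U" and Ksub: "subgroup K Gr" and ZK: "Z \<subseteq> K"
    and Sqd: "Sq = d ` Z"
    and HKS: "H = K \<inter> {g \<in> carrier Gr. d g = \<one>\<^bsub>U\<^esub>}"
    and KZH: "K \<subseteq> {z \<otimes>\<^bsub>Gr\<^esub> h | z h. z \<in> Z \<and> h \<in> H}"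
  shows "(subgroup G Gr \<and> G \<inter> {g \<in> carrier Gr. d g = \<one>\<^bsub>U\<^esub>} = H \<and> Z \<subseteq> G \<and> d ` G = carrier U)
     \<longleftrightarrow> (\<exists>W. subgroup W ((Gr\<lparr>carrier := normalizer Gr K\<rparr>) Mod K)
          \<and> (\<lambda>Yc. r_coset U Sq (d (SOME g. g \<in> Yc))) \<in> iso (((Gr\<lparr>carrier := normalizer Gr K\<rparr>) Mod K)\<lparr>carrier := W\<rparr>) (U Mod Sq)
          \<and> G = {g \<in> normalizer Gr K. r_coset Gr K g \<in> W})"
proof -
  interpret Gr: group Gr by fact
  interpret U: comm_group U by fact
  interpret dG: group_hom Gr U d using dh by (simp add: group_hom_def group_hom_axioms_def grp U.group_axioms)
  define Nz where "Nz = normalizer Gr K"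
  define NG where "NG = Gr\<lparr>carrier := Nz\<rparr>"
  define C where "C = NG Mod K"
  define dC where "dC = (\<lambda>Yc. r_coset U Sq (d (SOME g. g \<in> Yc)))"
  define S where "S = {g \<in> carrier Gr. d g = \<one>\<^bsub>U\<^esub>}"
  have Nzsub: "subgroup Nz Gr" unfolding Nz_def by (rule Gr.normalizer_imp_subgroup) (use Ksub in \<open>auto dest: subgroup.subset\<close>)
  have NzC: "Nz \<subseteq> carrier Gr" using Nzsub subgroup.subset by blast
  have nK: "normal K NG" unfolding NG_def Nz_def by (rule Gr.subgroup_in_normalizer[OF Ksub])
  interpret nK: normal K NG by fact
  have KNz: "K \<subseteq> Nz" using nK.subset by (simp add: NG_def)
  have KC: "K \<subseteq> carrier Gr" using Ksub subgroup.subset by blast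
  have grpNG: "group NG" by (rule nK.is_group)
  have grpC: "group C" unfolding C_def by (rule nK.factorgroup_is_group)
  have pih: "(\<lambda>a. r_coset Gr K a) \<in> hom NG C" using nK.r_coset_hom_Mod unfolding C_def NG_def by simp
  interpret pi: group_hom NG C "\<lambda>a. r_coset Gr K a" using pih grpC grpNG by (simp add: group_hom_def group_hom_axioms_def)
  have nSq: "normal Sq U" by (rule U.subgroup_imp_normal[OF sq])
  interpret nSq: normal Sq U by fact
  have ZC: "Z \<subseteq> carrier Gr" using ZK KC by blast
  have SqC: "Sq \<subseteq> carrier U" using sq subgroup.subset by blast
  have HK: "H \<subseteq> K" using HKS by blast
  have dK: "d ` K \<subseteq> Sq"
  proof
    fix y assume "y \<in> d ` K"
    then obtain k where k: "k \<in> K" "y = d k" by blast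
    then obtain z h where zh: "z \<in> Z" "h \<in> H" "k = z \<otimes>\<^bsub>Gr\<^esub> h" using KZH by blast
    have "z \<in> carrier Gr" "h \<in> carrier Gr" using zh ZC HK KC by auto
    hence "d k = d z \<otimes>\<^bsub>U\<^esub> d h" using zh by simp
    also have "\<dots> = d z" using zh HKS ZC by auto
    finally show "y \<in> Sq" using k zh Sqd by auto
  qed
  have carrC: "carrier C = rcosets\<^bsub>NG\<^esub> K" unfolding C_def FactGroup_def by simp
  have F1: "dC (r_coset Gr K g) = r_coset U Sq (d g)" if g: "g \<in> Nz" for g
  proof -
    have gc: "g \<in> carrier Gr" using g NzC by blast
    have "g \<in> r_coset Gr K g" using Gr.rcos_self[OF gc Ksub] .
    hence ex: "\<exists>x. x \<in> r_coset Gr K g" by blast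
    define g' where "g' = (SOME x. x \<in> r_coset Gr K g)"
    have "g' \<in> r_coset Gr K g" unfolding g'_def using someI_ex[OF ex] .
    then obtain k where k: "k \<in> K" "g' = k \<otimes>\<^bsub>Gr\<^esub> g" unfolding r_coset_def by blast
    have kc: "k \<in> carrier Gr" using k KC by blast
    have "d g' = d k \<otimes>\<^bsub>U\<^esub> d g" using k kc gc dG.hom_mult by simp
    hence "r_coset U Sq (d g') = r_coset U (r_coset U Sq (d k)) (d g)"
      using U.coset_mult_assoc[OF SqC] kc gc by simp
    also have "r_coset U Sq (d k) = Sq" using U.coset_join2[OF _ sq] dK k kc by auto
    finally show ?thesis unfolding dC_def g'_def by simp
  qed
  have rcosK: "r_coset Gr K a = r_coset Gr K b \<longleftrightarrow> a \<otimes>\<^bsub>Gr\<^esub> inv\<^bsub>Gr\<^esub> b \<in> K"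
    if ab: "a \<in> carrier Gr" "b \<in> carrier Gr" for a b
  proof
    assume "r_coset Gr K a = r_coset Gr K b"
    moreover have "a \<in> r_coset Gr K a" using Gr.rcos_self[OF ab(1) Ksub] .
    ultimately show "a \<otimes>\<^bsub>Gr\<^esub> inv\<^bsub>Gr\<^esub> b \<in> K" using subgroup.rcos_module_imp[OF Ksub grp ab(2)] by simp
  next
    assume "a \<otimes>\<^bsub>Gr\<^esub> inv\<^bsub>Gr\<^esub> b \<in> K"
    hence "a \<in> r_coset Gr K b" using subgroup.rcos_module_rev[OF Ksub grp ab(2) ab(1)] by simp
    thus "r_coset Gr K a = r_coset Gr K b" using Gr.repr_independence[OF _ ab(2) Ksub] by simp
  qed
  have rcosSq: "r_coset U Sq a = r_coset U Sq b \<longleftrightarrow> a \<otimes>\<^bsub>U\<^esub> inv\<^bsub>U\<^esub> b \<in> Sq"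
    if ab: "a \<in> carrier U" "b \<in> carrier U" for a b
  proof
    assume "r_coset U Sq a = r_coset U Sq b"
    moreover have "a \<in> r_coset U Sq a" using U.rcos_self[OF ab(1) sq] .
    ultimately show "a \<otimes>\<^bsub>U\<^esub> inv\<^bsub>U\<^esub> b \<in> Sq" using subgroup.rcos_module_imp[OF sq U.group_axioms ab(2)] by simp
  next
    assume "a \<otimes>\<^bsub>U\<^esub> inv\<^bsub>U\<^esub> b \<in> Sq"
    hence "a \<in> r_coset U Sq b" using subgroup.rcos_module_rev[OF sq U.group_axioms ab(2) ab(1)] by simp
    thus "r_coset U Sq a = r_coset U Sq b" using U.repr_independence[OF _ ab(2) sq] by simp
  qed
  have carrNG[simp]: "carrier NG = Nz" and multNG[simp]: "\<And>a b. a \<otimes>\<^bsub>NG\<^esub> b = a \<otimes>\<^bsub>Gr\<^esub> b"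
    and oneNG[simp]: "\<one>\<^bsub>NG\<^esub> = \<one>\<^bsub>Gr\<^esub>" by (simp_all add: NG_def)
  have invNG[simp]: "inv\<^bsub>NG\<^esub> a = inv\<^bsub>Gr\<^esub> a" if "a \<in> Nz" for a
    using Gr.m_inv_consistent[OF Nzsub that] by (simp add: NG_def)
  have oneC[simp]: "\<one>\<^bsub>C\<^esub> = K" and multC[simp]: "\<And>A B. A \<otimes>\<^bsub>C\<^esub> B = A <#>\<^bsub>Gr\<^esub> B"
    by (simp_all add: C_def FactGroup_def NG_def)
  have carrQ: "carrier (U Mod Sq) = rcosets\<^bsub>U\<^esub> Sq" and multQ: "\<And>A B. A \<otimes>\<^bsub>U Mod Sq\<^esub> B = A <#>\<^bsub>U\<^esub> B"
    by (simp_all add: FactGroup_def)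
  have pimult: "r_coset Gr K (a \<otimes>\<^bsub>Gr\<^esub> b) = r_coset Gr K a <#>\<^bsub>Gr\<^esub> r_coset Gr K b" if "a \<in> Nz" "b \<in> Nz" for a b
    using pi.hom_mult[of a b] that by simp
  have piinv: "r_coset Gr K (inv\<^bsub>Gr\<^esub> a) = inv\<^bsub>C\<^esub> (r_coset Gr K a)" if "a \<in> Nz" for a
    using pi.hom_inv[of a] that by simp
  have piK: "r_coset Gr K k = K" if "k \<in> K" for k
    using Gr.coset_join2[OF _ Ksub that] that KC by blast
  have dCK: "dC K = Sq"
  proof -
    have "dC K = dC (r_coset Gr K \<one>\<^bsub>Gr\<^esub>)" using KC by simp
    also have "\<dots> = r_coset U Sq (d \<one>\<^bsub>Gr\<^esub>)" using F1[OF subgroup.one_closed[OF Nzsub]] .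
    also have "\<dots> = Sq" using SqC by simp
    finally show ?thesis .
  qed
  have dCmult: "dC (r_coset Gr K a <#>\<^bsub>Gr\<^esub> r_coset Gr K b) = dC (r_coset Gr K a) <#>\<^bsub>U\<^esub> dC (r_coset Gr K b)"
    if ab: "a \<in> Nz" "b \<in> Nz" for a b
  proof -
    have abc: "a \<in> carrier Gr" "b \<in> carrier Gr" using ab NzC by auto
    have "dC (r_coset Gr K a <#>\<^bsub>Gr\<^esub> r_coset Gr K b) = dC (r_coset Gr K (a \<otimes>\<^bsub>Gr\<^esub> b))"
      using pimult[OF ab] by simp
    also have "\<dots> = r_coset U Sq (d (a \<otimes>\<^bsub>Gr\<^esub> b))" using F1[OF subgroup.m_closed[OF Nzsub ab]] .
    also have "\<dots> = r_coset U Sq (d a \<otimes>\<^bsub>U\<^esub> d b)" using abc by simp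
    also have "\<dots> = r_coset U Sq (d a) <#>\<^bsub>U\<^esub> r_coset U Sq (d b)" using nSq.rcos_sum abc by simp
    also have "\<dots> = dC (r_coset Gr K a) <#>\<^bsub>U\<^esub> dC (r_coset Gr K b)" using F1[OF ab(1)] F1[OF ab(2)] by simp
    finally show ?thesis .
  qed
  show ?thesis
  proof (intro allI iffI)
    fix G assume L: "subgroup G Gr \<and> G \<inter> {g \<in> carrier Gr. d g = \<one>\<^bsub>U\<^esub>} = H \<and> Z \<subseteq> G \<and> d ` G = carrier U"
    have Gs: "subgroup G Gr" and GS: "G \<inter> S = H" and ZG: "Z \<subseteq> G" and dG: "d ` G = carrier U"
      using L by (auto simp: S_def)
    have GC: "G \<subseteq> carrier Gr" using Gs subgroup.subset by blast
    have KG: "K \<subseteq> G"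
    proof
      fix k assume "k \<in> K"
      then obtain z h where zh: "z \<in> Z" "h \<in> H" "k = z \<otimes>\<^bsub>Gr\<^esub> h" using KZH by blast
      have "z \<in> G" "h \<in> G" using zh ZG GS by auto
      thus "k \<in> G" using zh(3) subgroup.m_closed[OF Gs] by simp
    qed
    have Kchar: "g \<in> K" if g: "g \<in> G" "d g \<in> Sq" for g
    proof -
      obtain z where z: "z \<in> Z" "d z = d g" using g Sqd by auto
      have zc: "z \<in> carrier Gr" and gc: "g \<in> carrier Gr" using z ZC g GC by auto
      have zG: "z \<in> G" using z ZG by auto
      have xG: "g \<otimes>\<^bsub>Gr\<^esub> inv\<^bsub>Gr\<^esub> z \<in> G" using subgroup.m_closed[OF Gs g(1) subgroup.m_inv_closed[OF Gs zG]] .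
      have "d (g \<otimes>\<^bsub>Gr\<^esub> inv\<^bsub>Gr\<^esub> z) = \<one>\<^bsub>U\<^esub>" using zc gc z by simp
      moreover have "g \<otimes>\<^bsub>Gr\<^esub> inv\<^bsub>Gr\<^esub> z \<in> carrier Gr" using zc gc by simp
      ultimately have "g \<otimes>\<^bsub>Gr\<^esub> inv\<^bsub>Gr\<^esub> z \<in> G \<inter> S" using xG unfolding S_def by simp
      hence "g \<otimes>\<^bsub>Gr\<^esub> inv\<^bsub>Gr\<^esub> z \<in> K" using GS HK by auto
      moreover have "z \<in> K" using z ZK by auto
      ultimately have "(g \<otimes>\<^bsub>Gr\<^esub> inv\<^bsub>Gr\<^esub> z) \<otimes>\<^bsub>Gr\<^esub> z \<in> K" using subgroup.m_closed[OF Ksub] by blast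
      thus ?thesis using zc gc by (simp add: Gr.m_assoc)
    qed
    have Conj: "g \<otimes>\<^bsub>Gr\<^esub> k \<otimes>\<^bsub>Gr\<^esub> inv\<^bsub>Gr\<^esub> g \<in> K" if gk: "g \<in> G" "k \<in> K" for g k
    proof -
      have gc: "g \<in> carrier Gr" and kc: "k \<in> carrier Gr" using gk GC KC by auto
      have kG: "k \<in> G" using gk KG by auto
      have "g \<otimes>\<^bsub>Gr\<^esub> k \<otimes>\<^bsub>Gr\<^esub> inv\<^bsub>Gr\<^esub> g \<in> G"
        using subgroup.m_closed[OF Gs subgroup.m_closed[OF Gs gk(1) kG] subgroup.m_inv_closed[OF Gs gk(1)]] .
      moreover have "d (g \<otimes>\<^bsub>Gr\<^esub> k \<otimes>\<^bsub>Gr\<^esub> inv\<^bsub>Gr\<^esub> g) = d k"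
      proof -
        have dc: "d g \<in> carrier U" "d k \<in> carrier U" using gc kc by auto
        have "d (g \<otimes>\<^bsub>Gr\<^esub> k \<otimes>\<^bsub>Gr\<^esub> inv\<^bsub>Gr\<^esub> g) = d g \<otimes>\<^bsub>U\<^esub> d k \<otimes>\<^bsub>U\<^esub> inv\<^bsub>U\<^esub> d g"
          using gc kc by simp
        also have "\<dots> = d k \<otimes>\<^bsub>U\<^esub> (d g \<otimes>\<^bsub>U\<^esub> inv\<^bsub>U\<^esub> d g)"
          using dc by (simp add: U.m_comm[of "d g" "d k"] U.m_assoc)
        also have "\<dots> = d k" using dc by simp
        finally show ?thesis .
      qed
      ultimately show ?thesis using Kchar dK gk by auto
    qed
    have conjmem: "y \<in> r_coset Gr (l_coset Gr g K) (inv\<^bsub>Gr\<^esub> g) \<longleftrightarrow> (\<exists>k\<in>K. y = g \<otimes>\<^bsub>Gr\<^esub> k \<otimes>\<^bsub>Gr\<^esub> inv\<^bsub>Gr\<^esub> g)" for g y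
      unfolding r_coset_def l_coset_def by auto
    have GNz: "G \<subseteq> Nz"
    proof
      fix g assume g: "g \<in> G"
      have gc: "g \<in> carrier Gr" using g GC by auto
      have "r_coset Gr (l_coset Gr g K) (inv\<^bsub>Gr\<^esub> g) = K"
      proof (rule equalityI[OF subsetI subsetI])
        fix y assume "y \<in> r_coset Gr (l_coset Gr g K) (inv\<^bsub>Gr\<^esub> g)"
        then obtain k where "k \<in> K" "y = g \<otimes>\<^bsub>Gr\<^esub> k \<otimes>\<^bsub>Gr\<^esub> inv\<^bsub>Gr\<^esub> g" using conjmem by blast
        thus "y \<in> K" using Conj[OF g] by simp
      next
        fix y assume y: "y \<in> K"
        have ig: "inv\<^bsub>Gr\<^esub> g \<in> G" using subgroup.m_inv_closed[OF Gs g] .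
        have k: "inv\<^bsub>Gr\<^esub> g \<otimes>\<^bsub>Gr\<^esub> y \<otimes>\<^bsub>Gr\<^esub> inv\<^bsub>Gr\<^esub> (inv\<^bsub>Gr\<^esub> g) \<in> K" using Conj[OF ig y] .
        have yc: "y \<in> carrier Gr" using y KC by auto
        have "y = g \<otimes>\<^bsub>Gr\<^esub> (inv\<^bsub>Gr\<^esub> g \<otimes>\<^bsub>Gr\<^esub> y \<otimes>\<^bsub>Gr\<^esub> inv\<^bsub>Gr\<^esub> (inv\<^bsub>Gr\<^esub> g)) \<otimes>\<^bsub>Gr\<^esub> inv\<^bsub>Gr\<^esub> g"
        proof -
          have ic: "inv\<^bsub>Gr\<^esub> g \<in> carrier Gr" using gc by simp
          have "g \<otimes>\<^bsub>Gr\<^esub> (inv\<^bsub>Gr\<^esub> g \<otimes>\<^bsub>Gr\<^esub> y \<otimes>\<^bsub>Gr\<^esub> inv\<^bsub>Gr\<^esub> (inv\<^bsub>Gr\<^esub> g)) \<otimes>\<^bsub>Gr\<^esub> inv\<^bsub>Gr\<^esub> g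
              = (g \<otimes>\<^bsub>Gr\<^esub> inv\<^bsub>Gr\<^esub> g) \<otimes>\<^bsub>Gr\<^esub> y \<otimes>\<^bsub>Gr\<^esub> (g \<otimes>\<^bsub>Gr\<^esub> inv\<^bsub>Gr\<^esub> g)"
            using gc yc ic by (simp only: Gr.inv_inv Gr.m_assoc Gr.m_closed)
          also have "\<dots> = y" using gc yc by simp
          finally show ?thesis by simp
        qed
        thus "y \<in> r_coset Gr (l_coset Gr g K) (inv\<^bsub>Gr\<^esub> g)" using conjmem k by blast
      qed
      thus "g \<in> Nz" unfolding Nz_def normalizer_def stabilizer_def using gc KC by auto
    qed
    have GsNG: "subgroup G NG" unfolding NG_def using Gr.subgroup_incl[OF Gs Nzsub GNz] .
    define W where "W = (\<lambda>a. r_coset Gr K a) ` G"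
    have Ws: "subgroup W C" unfolding W_def by (rule pi.subgroup_img_is_subgroup[OF GsNG])
    have hom: "dC \<in> hom (C\<lparr>carrier := W\<rparr>) (U Mod Sq)"
    proof (rule homI)
      fix Xc assume "Xc \<in> carrier (C\<lparr>carrier := W\<rparr>)"
      then obtain g where g: "g \<in> G" "Xc = r_coset Gr K g" by (auto simp: W_def)
      have "g \<in> Nz" using g GNz by auto
      hence "dC Xc = r_coset U Sq (d g)" using F1 g by simp
      moreover have "d g \<in> carrier U" using g GC by auto
      ultimately show "dC Xc \<in> carrier (U Mod Sq)" unfolding carrQ RCOSETS_def by auto
    next
      fix Xc Yc assume "Xc \<in> carrier (C\<lparr>carrier := W\<rparr>)" "Yc \<in> carrier (C\<lparr>carrier := W\<rparr>)"
      then obtain a b where ab: "a \<in> G" "Xc = r_coset Gr K a" "b \<in> G" "Yc = r_coset Gr K b" by (auto simp: W_def)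
      show "dC (Xc \<otimes>\<^bsub>C\<lparr>carrier := W\<rparr>\<^esub> Yc) = dC Xc \<otimes>\<^bsub>U Mod Sq\<^esub> dC Yc"
      proof -
        have "Xc \<otimes>\<^bsub>C\<lparr>carrier := W\<rparr>\<^esub> Yc = Xc <#>\<^bsub>Gr\<^esub> Yc" by (simp add: C_def FactGroup_def NG_def)
        moreover have "a \<in> Nz" "b \<in> Nz" using ab GNz by auto
        ultimately show ?thesis using dCmult[of a b] ab by (simp add: multQ)
      qed
    qed
    have inj: "inj_on dC W"
    proof (rule inj_onI)
      fix Xc Yc assume XY: "Xc \<in> W" "Yc \<in> W" "dC Xc = dC Yc"
      then obtain a b where ab: "a \<in> G" "Xc = r_coset Gr K a" "b \<in> G" "Yc = r_coset Gr K b" by (auto simp: W_def)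
      have abc: "a \<in> carrier Gr" "b \<in> carrier Gr" using ab GC by auto
      have "a \<in> Nz" "b \<in> Nz" using ab GNz by auto
      hence "r_coset U Sq (d a) = r_coset U Sq (d b)" using XY(3) ab F1 by metis
      hence "d a \<otimes>\<^bsub>U\<^esub> inv\<^bsub>U\<^esub> d b \<in> Sq" using rcosSq abc by simp
      hence "d (a \<otimes>\<^bsub>Gr\<^esub> inv\<^bsub>Gr\<^esub> b) \<in> Sq" using abc by simp
      moreover have "a \<otimes>\<^bsub>Gr\<^esub> inv\<^bsub>Gr\<^esub> b \<in> G" using subgroup.m_closed[OF Gs ab(1) subgroup.m_inv_closed[OF Gs ab(3)]] .
      ultimately have "a \<otimes>\<^bsub>Gr\<^esub> inv\<^bsub>Gr\<^esub> b \<in> K" using Kchar by simp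
      thus "Xc = Yc" using rcosK abc ab by simp
    qed
    have img: "dC ` W = rcosets\<^bsub>U\<^esub> Sq"
    proof
      show "dC ` W \<subseteq> rcosets\<^bsub>U\<^esub> Sq" using hom unfolding hom_def carrQ by auto
    next
      show "rcosets\<^bsub>U\<^esub> Sq \<subseteq> dC ` W"
      proof
        fix R assume "R \<in> rcosets\<^bsub>U\<^esub> Sq"
        then obtain u where u: "u \<in> carrier U" "R = r_coset U Sq u" unfolding RCOSETS_def by auto
        have "u \<in> d ` G" using dG u by simp
        then obtain g where g: "g \<in> G" "u = d g" by blast
        have "g \<in> Nz" using g GNz by auto
        hence "dC (r_coset Gr K g) = R" using F1 g u by simp
        thus "R \<in> dC ` W" using g unfolding W_def by blast
      qed
    qed
    have iso: "dC \<in> iso (C\<lparr>carrier := W\<rparr>) (U Mod Sq)"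
      unfolding iso_def bij_betw_def using hom inj img carrQ by auto
    have Geq: "G = {g \<in> Nz. r_coset Gr K g \<in> W}"
    proof (rule equalityI[OF subsetI subsetI])
      fix g assume "g \<in> G" thus "g \<in> {g \<in> Nz. r_coset Gr K g \<in> W}" using GNz W_def by auto
    next
      fix g assume g: "g \<in> {g \<in> Nz. r_coset Gr K g \<in> W}"
      then obtain g' where g': "g' \<in> G" "r_coset Gr K g = r_coset Gr K g'" unfolding W_def by auto
      have "g \<in> r_coset Gr K g" using Gr.rcos_self[OF _ Ksub] g NzC by auto
      hence "g \<in> r_coset Gr K g'" using g'(2) by simp
      then obtain k where k: "k \<in> K" "g = k \<otimes>\<^bsub>Gr\<^esub> g'" unfolding r_coset_def by blast
      have "k \<in> G" using k KG by auto
      thus "g \<in> G" using k(2) subgroup.m_closed[OF Gs _ g'(1)] by simp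
    qed
    show "\<exists>W. subgroup W ((Gr\<lparr>carrier := normalizer Gr K\<rparr>) Mod K)
          \<and> (\<lambda>Yc. r_coset U Sq (d (SOME g. g \<in> Yc))) \<in> iso (((Gr\<lparr>carrier := normalizer Gr K\<rparr>) Mod K)\<lparr>carrier := W\<rparr>) (U Mod Sq)
          \<and> G = {g \<in> normalizer Gr K. r_coset Gr K g \<in> W}"
      using Ws iso Geq unfolding C_def NG_def Nz_def dC_def by blast
  next
    fix G assume "\<exists>W. subgroup W ((Gr\<lparr>carrier := normalizer Gr K\<rparr>) Mod K)
          \<and> (\<lambda>Yc. r_coset U Sq (d (SOME g. g \<in> Yc))) \<in> iso (((Gr\<lparr>carrier := normalizer Gr K\<rparr>) Mod K)\<lparr>carrier := W\<rparr>) (U Mod Sq)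
          \<and> G = {g \<in> normalizer Gr K. r_coset Gr K g \<in> W}"
    then obtain W where Ws: "subgroup W C" and iso: "dC \<in> iso (C\<lparr>carrier := W\<rparr>) (U Mod Sq)"
      and Geq: "G = {g \<in> Nz. r_coset Gr K g \<in> W}"
      unfolding C_def NG_def Nz_def dC_def by blast
    have inj: "inj_on dC W" and img: "dC ` W = rcosets\<^bsub>U\<^esub> Sq"
      using iso unfolding iso_def bij_betw_def carrQ by auto
    have KW: "K \<in> W" using subgroup.one_closed[OF Ws] by simp
    have WC: "W \<subseteq> carrier C" using Ws subgroup.subset by blast
    have Gmem: "g \<in> G \<longleftrightarrow> g \<in> Nz \<and> r_coset Gr K g \<in> W" for g using Geq by simp
    have GNz: "G \<subseteq> Nz" using Gmem by blast
    have GC: "G \<subseteq> carrier Gr" using GNz NzC by blast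
    have KinG: "K \<subseteq> G"
    proof
      fix k assume k: "k \<in> K"
      have "k \<in> Nz" using k KNz by blast
      moreover have "r_coset Gr K k \<in> W" using piK[OF k] KW by simp
      ultimately show "k \<in> G" using Gmem by blast
    qed
    have Gs: "subgroup G Gr"
    proof (rule Gr.subgroupI)
      show "G \<subseteq> carrier Gr" by fact
      have "\<one>\<^bsub>Gr\<^esub> \<in> G" using KinG subgroup.one_closed[OF Ksub] by blast
      thus "G \<noteq> {}" by blast
    next
      fix a assume a: "a \<in> G"
      have aN: "a \<in> Nz" and aW: "r_coset Gr K a \<in> W" using a Gmem by auto
      have "inv\<^bsub>Gr\<^esub> a \<in> Nz" using subgroup.m_inv_closed[OF Nzsub aN] .
      moreover have "r_coset Gr K (inv\<^bsub>Gr\<^esub> a) \<in> W"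
        using piinv[OF aN] subgroup.m_inv_closed[OF Ws aW] by simp
      ultimately show "inv\<^bsub>Gr\<^esub> a \<in> G" using Gmem by blast
    next
      fix a b assume ab: "a \<in> G" "b \<in> G"
      have aN: "a \<in> Nz" and aW: "r_coset Gr K a \<in> W" using ab Gmem by auto
      have bN: "b \<in> Nz" and bW: "r_coset Gr K b \<in> W" using ab Gmem by auto
      have "a \<otimes>\<^bsub>Gr\<^esub> b \<in> Nz" using subgroup.m_closed[OF Nzsub aN bN] .
      moreover have "r_coset Gr K (a \<otimes>\<^bsub>Gr\<^esub> b) \<in> W"
        using pimult[OF aN bN] subgroup.m_closed[OF Ws aW bW] by simp
      ultimately show "a \<otimes>\<^bsub>Gr\<^esub> b \<in> G" using Gmem by blast
    qed
    have GS: "G \<inter> S = H"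
    proof
      show "G \<inter> S \<subseteq> H"
      proof
        fix g assume g: "g \<in> G \<inter> S"
        have gc: "g \<in> carrier Gr" and dg: "d g = \<one>\<^bsub>U\<^esub>" using g unfolding S_def by auto
        have gN: "g \<in> Nz" and gW: "r_coset Gr K g \<in> W" using g Gmem by auto
        have "dC (r_coset Gr K g) = r_coset U Sq \<one>\<^bsub>U\<^esub>" using F1[OF gN] dg by simp
        also have "\<dots> = dC K" using dCK SqC by simp
        finally have "r_coset Gr K g = K" using inj_onD[OF inj _ gW KW] by blast
        hence "r_coset Gr K g = r_coset Gr K \<one>\<^bsub>Gr\<^esub>" using KC by simp
        hence "g \<otimes>\<^bsub>Gr\<^esub> inv\<^bsub>Gr\<^esub> \<one>\<^bsub>Gr\<^esub> \<in> K" using rcosK[OF gc Gr.one_closed] by simp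
        hence "g \<in> K" using gc by simp
        thus "g \<in> H" using gc dg HKS by blast
      qed
    next
      show "H \<subseteq> G \<inter> S" using HK KinG HKS unfolding S_def by blast
    qed
    have dG: "d ` G = carrier U"
    proof
      show "d ` G \<subseteq> carrier U" using GC by auto
    next
      show "carrier U \<subseteq> d ` G"
      proof
        fix u assume u: "u \<in> carrier U"
        hence "r_coset U Sq u \<in> rcosets\<^bsub>U\<^esub> Sq" unfolding RCOSETS_def by blast
        hence "r_coset U Sq u \<in> dC ` W" using img by simp
        then obtain Xc where Xc: "Xc \<in> W" "dC Xc = r_coset U Sq u" by blast
        hence "Xc \<in> rcosets\<^bsub>NG\<^esub> K" using WC carrC by blast
        then obtain g where g: "g \<in> Nz" "Xc = r_coset Gr K g"
          unfolding RCOSETS_def by (auto simp: NG_def)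
        have gc: "g \<in> carrier Gr" using g NzC by blast
        have dgc: "d g \<in> carrier U" using gc by simp
        have "r_coset U Sq u = r_coset U Sq (d g)" using Xc(2) g F1[OF g(1)] by simp
        hence "u \<otimes>\<^bsub>U\<^esub> inv\<^bsub>U\<^esub> d g \<in> Sq" using rcosSq[OF u dgc] by simp
        hence "u \<otimes>\<^bsub>U\<^esub> inv\<^bsub>U\<^esub> d g \<in> d ` Z" using Sqd by simp
        then obtain z where z: "z \<in> Z" "d z = u \<otimes>\<^bsub>U\<^esub> inv\<^bsub>U\<^esub> d g" by auto
        have zc: "z \<in> carrier Gr" using z ZC by blast
        have zK: "z \<in> K" using z ZK by blast
        have zg: "z \<otimes>\<^bsub>Gr\<^esub> g \<in> Nz" using subgroup.m_closed[OF Nzsub _ g(1)] zK KNz by blast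
        have "(z \<otimes>\<^bsub>Gr\<^esub> g) \<otimes>\<^bsub>Gr\<^esub> inv\<^bsub>Gr\<^esub> g = z" using zc gc by (simp add: Gr.m_assoc)
        hence "r_coset Gr K (z \<otimes>\<^bsub>Gr\<^esub> g) = r_coset Gr K g"
          using rcosK[OF Gr.m_closed[OF zc gc] gc] zK by simp
        hence "z \<otimes>\<^bsub>Gr\<^esub> g \<in> G" using zg g Xc(1) Gmem by simp
        moreover have "d (z \<otimes>\<^bsub>Gr\<^esub> g) = u"
        proof -
          have "d (z \<otimes>\<^bsub>Gr\<^esub> g) = (u \<otimes>\<^bsub>U\<^esub> inv\<^bsub>U\<^esub> d g) \<otimes>\<^bsub>U\<^esub> d g" using zc gc z(2) by simp
          also have "\<dots> = u" using u dgc by (simp add: U.m_assoc)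
          finally show ?thesis .
        qed
        ultimately show "u \<in> d ` G" by (metis image_eqI)
      qed
    qed
    have GS': "G \<inter> {g \<in> carrier Gr. d g = \<one>\<^bsub>U\<^esub>} = H" using GS unfolding S_def .
    have ZG: "Z \<subseteq> G" using KinG ZK by blast
    show "subgroup G Gr \<and> G \<inter> {g \<in> carrier Gr. d g = \<one>\<^bsub>U\<^esub>} = H \<and> Z \<subseteq> G \<and> d ` G = carrier U"
      using Gs GS' dG ZG by blast
  qed
qed
lemma mod_inv_ex:
  assumes N: "N > (1::nat)" and c: "coprime x (int N)"
  shows "\<exists>e. 0 \<le> e \<and> e < int N \<and> coprime e (int N) \<and> (e * x) mod int N = 1"
proof -
  obtain u v where uv: "u * x + v * int N = gcd x (int N)" using bezout_int by blast
  hence uv1: "u * x + v * int N = 1" using c by simp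
  define e where "e = u mod int N"
  have "(e * x) mod int N = (u * x) mod int N" unfolding e_def by (simp add: mod_simps)
  also have "u * x = 1 - v * int N" using uv1 by simp
  also have "(1 - v * int N) mod int N = 1 mod int N" by (simp add: mod_eq_dvd_iff)
  also have "\<dots> = 1" using N by simp
  finally have ex: "(e * x) mod int N = 1" .
  have "coprime ((e * x) mod int N) (int N)" using ex by simp
  hence "coprime (e * x) (int N)" using N by simp
  hence "coprime e (int N)" by simp
  moreover have "0 \<le> e" "e < int N" using N unfolding e_def by simp_all
  ultimately show ?thesis using ex by blast
qed

lemma units_mod_mem: "x \<in> units_mod N \<longleftrightarrow> 0 \<le> x \<and> x < int N \<and> coprime x (int N)"
  by (simp add: units_mod_def)

lemma UnitsN_comm_group:
  assumes N: "N > (1::nat)"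
  shows "comm_group (UnitsN N)"
proof (rule comm_groupI)
  have one: "1 mod int N = 1" using N by simp
  fix x y assume "x \<in> carrier (UnitsN N)" "y \<in> carrier (UnitsN N)"
  thus "x \<otimes>\<^bsub>UnitsN N\<^esub> y \<in> carrier (UnitsN N)"
    using N by (simp add: UnitsN_def units_mod_def)
next
  show "\<one>\<^bsub>UnitsN N\<^esub> \<in> carrier (UnitsN N)" using N by (simp add: UnitsN_def units_mod_def)
next
  fix x y z assume "x \<in> carrier (UnitsN N)" "y \<in> carrier (UnitsN N)" "z \<in> carrier (UnitsN N)"
  show "x \<otimes>\<^bsub>UnitsN N\<^esub> y \<otimes>\<^bsub>UnitsN N\<^esub> z = x \<otimes>\<^bsub>UnitsN N\<^esub> (y \<otimes>\<^bsub>UnitsN N\<^esub> z)"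
    by (simp add: UnitsN_def mod_simps ac_simps)
next
  fix x y assume "x \<in> carrier (UnitsN N)" "y \<in> carrier (UnitsN N)"
  show "x \<otimes>\<^bsub>UnitsN N\<^esub> y = y \<otimes>\<^bsub>UnitsN N\<^esub> x" by (simp add: UnitsN_def ac_simps)
next
  fix x assume "x \<in> carrier (UnitsN N)"
  thus "\<one>\<^bsub>UnitsN N\<^esub> \<otimes>\<^bsub>UnitsN N\<^esub> x = x" using N by (simp add: UnitsN_def units_mod_def)
next
  fix x assume x: "x \<in> carrier (UnitsN N)"
  then obtain e where "0 \<le> e \<and> e < int N \<and> coprime e (int N) \<and> (e * x) mod int N = 1"
    using mod_inv_ex[OF N] by (auto simp: UnitsN_def units_mod_def)
  thus "\<exists>y\<in>carrier (UnitsN N). y \<otimes>\<^bsub>UnitsN N\<^esub> x = \<one>\<^bsub>UnitsN N\<^esub>"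
    using N by (auto simp: UnitsN_def units_mod_def)
qed

lemma modsum_l: "(a mod n * b + c mod n * d) mod n = (a * b + c * d) mod (n::int)"
  by (metis mod_add_eq mod_mult_left_eq)
lemma modsum_r: "(b * (a mod n) + d * (c mod n)) mod n = (b * a + d * c) mod (n::int)"
  by (metis mod_add_eq mod_mult_right_eq)
lemma moddiff: "(a mod n * (b mod n) - c mod n * (d mod n)) mod n = (a * b - c * d) mod (n::int)"
  by (metis mod_diff_eq mod_mult_eq)

lemma mred_idem[simp]: "mred N (mred N A) = mred N A"
  by (cases A) auto

lemma mred_mmul_l: "mred N (mmul (mred N A) B) = mred N (mmul A B)"
  by (cases A; cases B) (simp add: modsum_l)

lemma mred_mmul_r: "mred N (mmul A (mred N B)) = mred N (mmul A B)"
  by (cases A; cases B) (simp add: modsum_r)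

lemma mmul_assoc: "mmul (mmul A B) C = mmul A (mmul B C)"
  by (cases A; cases B; cases C) (simp add: algebra_simps)

lemma mdet_mmul: "mdet (mmul A B) = mdet A * mdet B"
  by (cases A; cases B) (simp add: algebra_simps)

lemma mdet_mred: "mdet (mred N A) mod int N = mdet A mod int N"
  by (cases A) (simp add: moddiff)

lemma coprime_mdet_mred:
  assumes "N > 0" shows "coprime (mdet (mred N A)) (int N) \<longleftrightarrow> coprime (mdet A) (int N)"
proof -
  have "coprime (mdet (mred N A)) (int N) \<longleftrightarrow> coprime (mdet (mred N A) mod int N) (int N)"
    using assms by simp
  also have "\<dots> \<longleftrightarrow> coprime (mdet A mod int N) (int N)" by (simp only: mdet_mred)
  also have "\<dots> \<longleftrightarrow> coprime (mdet A) (int N)" using assms by simp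
  finally show ?thesis .
qed

lemma GL2_carrier: "A \<in> carrier (GL2 N) \<longleftrightarrow> mred N A = A \<and> coprime (mdet A) (int N)"
  by (simp add: GL2_def)

lemma GL2_mult: "A \<otimes>\<^bsub>GL2 N\<^esub> B = mred N (mmul A B)"
  by (simp add: GL2_def)

lemma GL2_one: "N > 1 \<Longrightarrow> \<one>\<^bsub>GL2 N\<^esub> = (1,0,0,1)"
  by (simp add: GL2_def)

lemma GL2_group:
  assumes N: "N > (1::nat)"
  shows "group (GL2 N)"
proof (rule groupI)
  fix x y assume "x \<in> carrier (GL2 N)" "y \<in> carrier (GL2 N)"
  thus "x \<otimes>\<^bsub>GL2 N\<^esub> y \<in> carrier (GL2 N)"
    using N by (simp add: GL2_carrier GL2_mult coprime_mdet_mred mdet_mmul)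
next
  show "\<one>\<^bsub>GL2 N\<^esub> \<in> carrier (GL2 N)" using N by (simp add: GL2_carrier GL2_one)
next
  fix x y z assume "x \<in> carrier (GL2 N)" "y \<in> carrier (GL2 N)" "z \<in> carrier (GL2 N)"
  show "x \<otimes>\<^bsub>GL2 N\<^esub> y \<otimes>\<^bsub>GL2 N\<^esub> z = x \<otimes>\<^bsub>GL2 N\<^esub> (y \<otimes>\<^bsub>GL2 N\<^esub> z)"
    by (simp add: GL2_mult mred_mmul_l mred_mmul_r mmul_assoc)
next
  fix x assume x: "x \<in> carrier (GL2 N)"
  obtain a b c d where A: "x = (a,b,c,d)" by (cases x)
  show "\<one>\<^bsub>GL2 N\<^esub> \<otimes>\<^bsub>GL2 N\<^esub> x = x" using N x A by (simp add: GL2_carrier GL2_one GL2_mult)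
next
  fix x assume x: "x \<in> carrier (GL2 N)"
  obtain a b c d where A: "x = (a,b,c,d)" by (cases x)
  have cx: "coprime (mdet x) (int N)" and rx: "mred N x = x" using x by (auto simp: GL2_carrier)
  obtain e where e: "0 \<le> e" "e < int N" "coprime e (int N)" "(e * mdet x) mod int N = 1"
    using mod_inv_ex[OF N cx] by blast
  define Y where "Y = (e * d, -(e * b), -(e * c), e * a)"
  have "mdet Y = e * e * mdet x" unfolding Y_def A by (simp add: algebra_simps)
  hence cY: "coprime (mdet Y) (int N)" using e(3) cx by simp
  have "mmul Y x = (e * mdet x, 0, 0, e * mdet x)" unfolding Y_def A by (simp add: algebra_simps)
  hence "mred N (mmul (mred N Y) x) = (1,0,0,1)" using e(4) by (simp add: mred_mmul_l)
  moreover have "mred N Y \<in> carrier (GL2 N)" using cY N by (simp add: GL2_carrier coprime_mdet_mred)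
  ultimately show "\<exists>y\<in>carrier (GL2 N). y \<otimes>\<^bsub>GL2 N\<^esub> x = \<one>\<^bsub>GL2 N\<^esub>"
    using N by (auto simp: GL2_mult GL2_one)
qed

lemma UnitsN_carrier: "carrier (UnitsN N) = units_mod N" by (simp add: UnitsN_def)
lemma UnitsN_mult: "x \<otimes>\<^bsub>UnitsN N\<^esub> y = (x * y) mod int N" by (simp add: UnitsN_def)
lemma UnitsN_one: "\<one>\<^bsub>UnitsN N\<^esub> = 1 mod int N" by (simp add: UnitsN_def)

lemma det_hom:
  assumes N: "N > (1::nat)"
  shows "(\<lambda>A. mdet A mod int N) \<in> hom (GL2 N) (UnitsN N)"
proof (rule homI)
  fix x assume "x \<in> carrier (GL2 N)"
  thus "mdet x mod int N \<in> carrier (UnitsN N)" using N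
    by (simp add: GL2_carrier UnitsN_carrier units_mod_def)
next
  fix x y assume "x \<in> carrier (GL2 N)" "y \<in> carrier (GL2 N)"
  have "mdet (mred N (mmul x y)) mod int N = (mdet x * mdet y) mod int N"
    by (simp add: mdet_mred mdet_mmul)
  thus "mdet (x \<otimes>\<^bsub>GL2 N\<^esub> y) mod int N = (mdet x mod int N) \<otimes>\<^bsub>UnitsN N\<^esub> (mdet y mod int N)"
    by (simp add: GL2_mult UnitsN_mult mod_mult_eq)
qed

lemma SL2Z_group: "group SL2Z"
proof (rule groupI)
  fix x y assume "x \<in> carrier SL2Z" "y \<in> carrier SL2Z"
  thus "x \<otimes>\<^bsub>SL2Z\<^esub> y \<in> carrier SL2Z" by (simp add: SL2Z_def mdet_mmul)
next
  show "\<one>\<^bsub>SL2Z\<^esub> \<in> carrier SL2Z" by (simp add: SL2Z_def)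
next
  fix x y z assume "x \<in> carrier SL2Z" "y \<in> carrier SL2Z" "z \<in> carrier SL2Z"
  show "x \<otimes>\<^bsub>SL2Z\<^esub> y \<otimes>\<^bsub>SL2Z\<^esub> z = x \<otimes>\<^bsub>SL2Z\<^esub> (y \<otimes>\<^bsub>SL2Z\<^esub> z)"
    by (simp add: SL2Z_def mmul_assoc)
next
  fix x assume "x \<in> carrier SL2Z"
  show "\<one>\<^bsub>SL2Z\<^esub> \<otimes>\<^bsub>SL2Z\<^esub> x = x" by (cases x) (simp add: SL2Z_def)
next
  fix x assume x: "x \<in> carrier SL2Z"
  obtain a b c d where A: "x = (a,b,c,d)" by (cases x)
  have "mdet (d, - b, - c, a) = 1" using x A by (simp add: SL2Z_def algebra_simps)
  moreover have "mmul (d, - b, - c, a) x = (1,0,0,1)" using x A by (simp add: SL2Z_def algebra_simps)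
  ultimately show "\<exists>y\<in>carrier SL2Z. y \<otimes>\<^bsub>SL2Z\<^esub> x = \<one>\<^bsub>SL2Z\<^esub>"
    by (intro bexI[of _ "(d, - b, - c, a)"]) (simp_all add: SL2Z_def)
qed

lemma mred_hom:
  assumes N: "N > (1::nat)"
  shows "mred N \<in> hom SL2Z (GL2 N)"
proof (rule homI)
  fix x assume "x \<in> carrier SL2Z"
  thus "mred N x \<in> carrier (GL2 N)" using N by (simp add: SL2Z_def GL2_carrier coprime_mdet_mred)
next
  fix x y assume "x \<in> carrier SL2Z" "y \<in> carrier SL2Z"
  show "mred N (x \<otimes>\<^bsub>SL2Z\<^esub> y) = mred N x \<otimes>\<^bsub>GL2 N\<^esub> mred N y"
    by (simp add: SL2Z_def GL2_mult mred_mmul_l mred_mmul_r)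
qed

lemma scal_hom:
  assumes N: "N > (1::nat)"
  shows "scal \<in> hom (UnitsN N) (GL2 N)"
proof (rule homI)
  fix x assume "x \<in> carrier (UnitsN N)"
  thus "scal x \<in> carrier (GL2 N)" using N by (simp add: scal_def UnitsN_carrier units_mod_def GL2_carrier)
next
  fix x y assume "x \<in> carrier (UnitsN N)" "y \<in> carrier (UnitsN N)"
  thus "scal (x \<otimes>\<^bsub>UnitsN N\<^esub> y) = scal x \<otimes>\<^bsub>GL2 N\<^esub> scal y"
    by (simp add: scal_def UnitsN_mult GL2_mult)
qed

lemma scal_central:
  "A \<in> carrier (GL2 N) \<Longrightarrow> scal u \<otimes>\<^bsub>GL2 N\<^esub> A = A \<otimes>\<^bsub>GL2 N\<^esub> scal u"
  by (cases A) (simp add: scal_def GL2_mult ac_simps)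

lemma (in group) central_prod_subgroup:
  assumes Z: "subgroup Z G" and H: "subgroup H G"
    and cen: "\<And>z g. z \<in> Z \<Longrightarrow> g \<in> carrier G \<Longrightarrow> z \<otimes> g = g \<otimes> z"
  shows "subgroup {z \<otimes> h | z h. z \<in> Z \<and> h \<in> H} G"
proof (rule subgroupI)
  have ZC: "Z \<subseteq> carrier G" and HC: "H \<subseteq> carrier G" using Z H subgroup.subset by blast+
  show "{z \<otimes> h | z h. z \<in> Z \<and> h \<in> H} \<subseteq> carrier G" using ZC HC by blast
  have "\<one> \<otimes> \<one> \<in> {z \<otimes> h | z h. z \<in> Z \<and> h \<in> H}" using subgroup.one_closed[OF Z] subgroup.one_closed[OF H] by blast
  thus "{z \<otimes> h | z h. z \<in> Z \<and> h \<in> H} \<noteq> {}" by blast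
next
  have ZC: "Z \<subseteq> carrier G" and HC: "H \<subseteq> carrier G" using Z H subgroup.subset by blast+
  fix a assume "a \<in> {z \<otimes> h | z h. z \<in> Z \<and> h \<in> H}"
  then obtain z h where zh: "z \<in> Z" "h \<in> H" "a = z \<otimes> h" by blast
  have zc: "z \<in> carrier G" and hc: "h \<in> carrier G" using zh ZC HC by blast+
  have "inv a = inv h \<otimes> inv z" using zh zc hc by (simp add: inv_mult_group)
  also have "\<dots> = inv z \<otimes> inv h" using cen[OF subgroup.m_inv_closed[OF Z zh(1)]] hc by simp
  finally show "inv a \<in> {z \<otimes> h | z h. z \<in> Z \<and> h \<in> H}"
    using subgroup.m_inv_closed[OF Z zh(1)] subgroup.m_inv_closed[OF H zh(2)] by blast
next
  have ZC: "Z \<subseteq> carrier G" and HC: "H \<subseteq> carrier G" using Z H subgroup.subset by blast+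
  fix a b assume "a \<in> {z \<otimes> h | z h. z \<in> Z \<and> h \<in> H}" "b \<in> {z \<otimes> h | z h. z \<in> Z \<and> h \<in> H}"
  then obtain z h z' h' where zh: "z \<in> Z" "h \<in> H" "a = z \<otimes> h" "z' \<in> Z" "h' \<in> H" "b = z' \<otimes> h'" by blast
  have c: "z \<in> carrier G" "h \<in> carrier G" "z' \<in> carrier G" "h' \<in> carrier G" using zh ZC HC by blast+
  have "a \<otimes> b = z \<otimes> (h \<otimes> z') \<otimes> h'" using zh c by (simp add: m_assoc)
  also have "h \<otimes> z' = z' \<otimes> h" using cen[OF zh(4) c(2)] by simp
  also have "z \<otimes> (z' \<otimes> h) \<otimes> h' = (z \<otimes> z') \<otimes> (h \<otimes> h')" using c by (simp add: m_assoc)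
  finally show "a \<otimes> b \<in> {z \<otimes> h | z h. z \<in> Z \<and> h \<in> H}"
    using subgroup.m_closed[OF Z zh(1) zh(4)] subgroup.m_closed[OF H zh(2) zh(5)] by blast
qed

lemma (in comm_group) squares_subgroup:
  "subgroup {u \<otimes> u | u. u \<in> carrier G} G"
proof (rule subgroupI)
  show "{u \<otimes> u | u. u \<in> carrier G} \<subseteq> carrier G" by auto
  show "{u \<otimes> u | u. u \<in> carrier G} \<noteq> {}" by blast
next
  fix a assume "a \<in> {u \<otimes> u | u. u \<in> carrier G}"
  then obtain u where u: "u \<in> carrier G" "a = u \<otimes> u" by blast
  hence "inv a = inv u \<otimes> inv u" by (simp add: inv_mult)
  thus "inv a \<in> {u \<otimes> u | u. u \<in> carrier G}" using u by blast
next
  fix a b assume "a \<in> {u \<otimes> u | u. u \<in> carrier G}" "b \<in> {u \<otimes> u | u. u \<in> carrier G}"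
  then obtain u v where uv: "u \<in> carrier G" "a = u \<otimes> u" "v \<in> carrier G" "b = v \<otimes> v" by blast
  hence "a \<otimes> b = (u \<otimes> v) \<otimes> (u \<otimes> v)" by (simp add: m_ac)
  thus "a \<otimes> b \<in> {u \<otimes> u | u. u \<in> carrier G}" using uv by blast
qed


theorem lemma5p2:
  fixes \<Gamma> :: "mat2 set" and N0 N :: nat and H :: "mat2 set"
  assumes "congruence_subgroup \<Gamma>"
    and "(-1, 0, 0, -1) \<in> \<Gamma>"
    and "N0 = level \<Gamma>"
    and "N = (if multiplicity 2 N0 = 0 then N0
              else if multiplicity 2 N0 = 1 then 4 * N0 else 2 * N0)"
    and "N > 1"
    and "H = mred N ` \<Gamma>"
    and "H = Htilde N H \<inter> SL2 N"
  shows "\<forall>G. (subgroup G (GL2 N) \<and> G \<inter> SL2 N = H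
              \<and> scal ` units_mod N \<subseteq> G
              \<and> (\<lambda>A. mdet A mod int N) ` G = units_mod N)
          \<longleftrightarrow> (\<exists>W. subgroup W (Cgrp N H)
                   \<and> detC N \<in> iso ((Cgrp N H)\<lparr>carrier := W\<rparr>) (QN N)
                   \<and> G = preimC N H W)"
proof -
  have N: "N > 1" by fact
  have Gam: "subgroup \<Gamma> SL2Z" using assms(1) by (simp add: congruence_subgroup_def)
  interpret Gr: group "GL2 N" using GL2_group[OF N] .
  interpret U: comm_group "UnitsN N" using UnitsN_comm_group[OF N] .
  define d where "d = (\<lambda>A. mdet A mod int N)"
  define Z where "Z = scal ` units_mod N"
  have dh: "d \<in> hom (GL2 N) (UnitsN N)" unfolding d_def using det_hom[OF N] .
  have sqeq: "squares_mod N = {u \<otimes>\<^bsub>UnitsN N\<^esub> u | u. u \<in> carrier (UnitsN N)}"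
    by (simp add: squares_mod_def UnitsN_mult UnitsN_carrier)
  have sq: "subgroup (squares_mod N) (UnitsN N)" unfolding sqeq by (rule U.squares_subgroup)
  interpret mh: group_hom SL2Z "GL2 N" "mred N"
    using mred_hom[OF N] SL2Z_group Gr.group_axioms by (simp add: group_hom_def group_hom_axioms_def)
  have Hsub: "subgroup H (GL2 N)" unfolding assms(6) by (rule mh.subgroup_img_is_subgroup[OF Gam])
  interpret sh: group_hom "UnitsN N" "GL2 N" scal
    using scal_hom[OF N] U.group_axioms Gr.group_axioms by (simp add: group_hom_def group_hom_axioms_def)
  have Zsub: "subgroup Z (GL2 N)" unfolding Z_def using sh.img_is_subgroup by (simp add: UnitsN_carrier)
  have Keq: "Htilde N H = {z \<otimes>\<^bsub>GL2 N\<^esub> h | z h. z \<in> Z \<and> h \<in> H}"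
    unfolding Htilde_def Z_def GL2_mult by blast
  have cen: "\<And>z g. z \<in> Z \<Longrightarrow> g \<in> carrier (GL2 N) \<Longrightarrow> z \<otimes>\<^bsub>GL2 N\<^esub> g = g \<otimes>\<^bsub>GL2 N\<^esub> z"
    unfolding Z_def using scal_central by blast
  have Ksub: "subgroup (Htilde N H) (GL2 N)"
    unfolding Keq by (rule Gr.central_prod_subgroup[OF Zsub Hsub cen])
  have ZK: "Z \<subseteq> Htilde N H"
  proof
    fix z assume z: "z \<in> Z"
    have zc: "z \<in> carrier (GL2 N)" using z Zsub subgroup.subset by blast
    have "\<one>\<^bsub>GL2 N\<^esub> \<in> H" using subgroup.one_closed[OF Hsub] .
    hence "z \<otimes>\<^bsub>GL2 N\<^esub> \<one>\<^bsub>GL2 N\<^esub> \<in> Htilde N H" using z unfolding Keq by blast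
    thus "z \<in> Htilde N H" using zc by simp
  qed
  have Sqd: "squares_mod N = d ` Z"
  proof -
    have "d ` Z = (\<lambda>u. (u * u) mod int N) ` units_mod N" by (simp add: Z_def d_def image_image scal_def)
    thus ?thesis unfolding squares_mod_def by (simp add: Setcompr_eq_image)
  qed
  have SL2eq: "SL2 N = {g \<in> carrier (GL2 N). d g = \<one>\<^bsub>UnitsN N\<^esub>}"
    by (simp add: SL2_def d_def UnitsN_one)
  have HKS: "H = Htilde N H \<inter> {g \<in> carrier (GL2 N). d g = \<one>\<^bsub>UnitsN N\<^esub>}"
    using assms(7) unfolding SL2eq .
  have KZH: "Htilde N H \<subseteq> {z \<otimes>\<^bsub>GL2 N\<^esub> h | z h. z \<in> Z \<and> h \<in> H}" unfolding Keq by blast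
  have main: "(subgroup G (GL2 N) \<and> G \<inter> {g \<in> carrier (GL2 N). d g = \<one>\<^bsub>UnitsN N\<^esub>} = H \<and> Z \<subseteq> G \<and> d ` G = carrier (UnitsN N))
     \<longleftrightarrow> (\<exists>W. subgroup W ((GL2 N\<lparr>carrier := normalizer (GL2 N) (Htilde N H)\<rparr>) Mod (Htilde N H))
          \<and> (\<lambda>Yc. r_coset (UnitsN N) (squares_mod N) (d (SOME g. g \<in> Yc))) \<in> iso (((GL2 N\<lparr>carrier := normalizer (GL2 N) (Htilde N H)\<rparr>) Mod (Htilde N H))\<lparr>carrier := W\<rparr>) (UnitsN N Mod squares_mod N)
          \<and> G = {g \<in> normalizer (GL2 N) (Htilde N H). r_coset (GL2 N) (Htilde N H) g \<in> W})" for G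
    by (rule abstract_main[OF Gr.group_axioms U.comm_group_axioms dh sq Ksub ZK Sqd HKS KZH])
  have detCeq: "detC N = (\<lambda>Yc. r_coset (UnitsN N) (squares_mod N) (d (SOME g. g \<in> Yc)))"
    by (rule ext) (simp add: detC_def d_def)
  show ?thesis
  proof (intro allI)
    fix G
    show "(subgroup G (GL2 N) \<and> G \<inter> SL2 N = H
              \<and> scal ` units_mod N \<subseteq> G
              \<and> (\<lambda>A. mdet A mod int N) ` G = units_mod N)
          \<longleftrightarrow> (\<exists>W. subgroup W (Cgrp N H)
                   \<and> detC N \<in> iso ((Cgrp N H)\<lparr>carrier := W\<rparr>) (QN N)
                   \<and> G = preimC N H W)"
      using main[of G] unfolding SL2eq detCeq Cgrp_def NormHt_def QN_def preimC_def
      by (simp only: d_def[symmetric] Z_def[symmetric] UnitsN_carrier)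
  qed
qed

end
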